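(* Assume $|\sigma(u)|\le M_\sigma$ for all $u\in\mathbb R$ and $M_2<\infty$. Let $\bar w=(\bar w_1,\bar w_2)\in\mathsf W$ be a minimizer of $w\mapsto\|f_w-f_{\mathbf P}\|_{\mathbb L_2(\mu)}$ and $p=\mathcal N(\bar w_1,\tau_1^2\mathbf I_{D_0D_1})\otimes\mathcal N(\bar w_2,\tau_2^2\mathbf I_{D_1D_2})$ with $\tau_1,\tau_2>0$. Then, with $G_1(w)=\|f_w-f_{w_1,\bar w_2}\|^2_{\mathbb L_2(\mu)}$, $$\int_{\mathsf W}G_1(w)\,p(dw)\le(M_\sigma\tau_2)^2\mu(\mathcal X)D_1D_2.$$
   Context: $\mathcal X\subset\mathbb R^{D_0}$ Borel, $\mu$ a $\sigma$-finite measure on $\mathcal X$, $M_2^2=D_0^{-1}\int\|x\|_2^2\mu(dx)$, $\|f\|^2_{\mathbb L_2(\mu)}=\int\|f(x)\|_2^2\mu(dx)$, $f_{\mathbf P}\in\mathbb L_2(\mu)$ a given target. Parameters $w=(w_1,w_2)\in\mathsf W=\mathbb R^{D_0\times D_1}\times\mathbb R^{D_1\times D_2}$; $f_w=f_{w_1,w_2}$, $f_w(x)=w_2^\top\bar\sigma(w_1^\top x)$, $\bar\sigma$ applying $\sigma$ coordinatewise. *)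

theory Defs
  imports "HOL-Probability.Probability"
begin

definition sigma_bar :: "(real \<Rightarrow> real) \<Rightarrow> real^'n \<Rightarrow> real^'n" where
  "sigma_bar \<sigma> v = (\<chi> i. \<sigma> (v $ i))"

definition fnet :: "(real \<Rightarrow> real) \<Rightarrow> real^'d1^'d0 \<Rightarrow> real^'d2^'d1 \<Rightarrow> real^'d0 \<Rightarrow> real^'d2" where
  "fnet \<sigma> w1 w2 x = transpose w2 *v sigma_bar \<sigma> (transpose w1 *v x)"

definition L2sq :: "'a measure \<Rightarrow> ('a \<Rightarrow> 'b::real_normed_vector) \<Rightarrow> ennreal" where
  "L2sq \<mu> f = (\<integral>\<^sup>+ x. ennreal ((norm (f x))\<^sup>2) \<partial>\<mu>)"

text \<open>Isotropic Gaussian N(m, tau^2 I) on matrices: product of one-dimensional normals.\<close>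
definition gauss_mat :: "real^'n^'m \<Rightarrow> real \<Rightarrow> (real^'n^'m) measure" where
  "gauss_mat m \<tau> = density lborel
     (\<lambda>w. ennreal (\<Prod>i\<in>UNIV. \<Prod>j\<in>UNIV. normal_density (m $ i $ j) \<tau> (w $ i $ j)))"

end

theory Submission
  imports Defs
begin


definition ee :: "'m::finite \<Rightarrow> 'n::finite \<Rightarrow> real^'n^'m" where
  "ee i j = axis i (axis j 1)"

lemma Basis_mat: "(Basis :: (real^'n::finite^'m::finite) set) = (\<lambda>(i,j). ee i j) ` UNIV"
  by (auto simp: Basis_vec_def ee_def)

lemma inj_ee: "inj (\<lambda>(i,j). ee (i::'m::finite) (j::'n::finite))"
  by (auto simp: inj_def ee_def axis_eq_axis)

lemma ee_comp: "ee i j $ k $ l = (if k = i \<and> l = j then 1 else 0)"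
  by (auto simp: ee_def axis_def)

lemma inner_ee: "(w::real^'n::finite^'m::finite) \<bullet> ee i j = w $ i $ j"
  by (simp add: ee_def inner_axis)

lemma phi0_comp: "(\<Sum>b\<in>(Basis::(real^'n::finite^'m::finite) set). f b *\<^sub>R b) $ i $ j = f (ee i j)"
proof -
  have "(\<Sum>b\<in>(Basis::(real^'n::finite^'m::finite) set). f b *\<^sub>R b) \<bullet> ee i j = f (ee i j)"
  proof -
    have e: "ee i j \<in> (Basis::(real^'n::finite^'m::finite) set)" unfolding Basis_mat by (rule image_eqI[of _ _ "(i,j)"]) auto
    have "(\<Sum>b\<in>(Basis::(real^'n::finite^'m::finite) set). f b *\<^sub>R b) \<bullet> ee i j
       = (\<Sum>b\<in>(Basis::(real^'n::finite^'m::finite) set). if b = ee i j then f b else 0)"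
      unfolding inner_sum_left using e by (intro sum.cong) (auto simp: inner_Basis)
    also have "\<dots> = f (ee i j)" using e by simp
    finally show ?thesis .
  qed
  then show ?thesis by (simp add: inner_ee)
qed

lemma prod_Basis_mat: "(\<Prod>b\<in>(Basis::(real^'n::finite^'m::finite) set). g b) = (\<Prod>i\<in>UNIV. \<Prod>j\<in>UNIV. g (ee i j))"
proof -
  have "(\<Prod>b\<in>(Basis::(real^'n::finite^'m::finite) set). g b) = (\<Prod>p\<in>UNIV. g (case p of (i,j) \<Rightarrow> ee i j))"
    unfolding Basis_mat by (subst prod.reindex[OF inj_ee]) simp
  also have "\<dots> = (\<Prod>p\<in>UNIV \<times> UNIV. g (case p of (i,j) \<Rightarrow> ee i j))" by simp
  also have "\<dots> = (\<Prod>i\<in>UNIV. \<Prod>j\<in>UNIV. g (ee i j))"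
    using prod.cartesian_product[of "\<lambda>i j. g (ee i j)" UNIV UNIV] by (simp add: case_prod_beta')
  finally show ?thesis .
qed


lemma measurable_mat_nth[measurable]: "(\<lambda>x::real^'n::finite^'m::finite. x $ i $ j) \<in> borel_measurable borel"
  unfolding inner_ee[symmetric] by simp

definition phi0 :: "(real^'n::finite^'m::finite \<Rightarrow> real) \<Rightarrow> real^'n^'m" where
  "phi0 f = (\<Sum>b\<in>Basis. f b *\<^sub>R b)"

lemma phi0_meas[measurable]: "phi0 \<in> measurable (\<Pi>\<^sub>M b\<in>Basis. lborel) borel"
  unfolding phi0_def by measurable

lemma lborel_mat: "(lborel :: (real^'n::finite^'m::finite) measure) = distr (\<Pi>\<^sub>M b\<in>Basis. lborel) borel phi0"
  unfolding phi0_def by (rule lborel_eq)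

definition unee :: "real^'n::finite^'m::finite \<Rightarrow> 'm \<times> 'n" where
  "unee b = inv (\<lambda>(i,j). ee i j) b"

lemma unee_ee[simp]: "unee (ee i j) = (i,j)"
  unfolding unee_def using inv_f_f[OF inj_ee, of "(i,j)"] by simp

lemma int_prod_mat:
  fixes h :: "'m::finite \<Rightarrow> 'n::finite \<Rightarrow> real \<Rightarrow> real"
  assumes int: "\<And>i j. integrable lborel (h i j)"
  shows "integrable lborel (\<lambda>w::real^'n^'m. \<Prod>i\<in>UNIV. \<Prod>j\<in>UNIV. h i j (w$i$j))"
    and "(\<integral>w. (\<Prod>i\<in>UNIV. \<Prod>j\<in>UNIV. h i j (w$i$j)) \<partial>(lborel::(real^'n^'m) measure))
          = (\<Prod>i\<in>UNIV. \<Prod>j\<in>UNIV. \<integral>x. h i j x \<partial>lborel)"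
proof -
  interpret product_sigma_finite "\<lambda>_::real^'n^'m. lborel::real measure" by standard
  define H where "H b = (case unee b of (i,j) \<Rightarrow> h i j)" for b :: "real^'n^'m"
  have Hee: "H (ee i j) = h i j" for i j by (simp add: H_def)
  have hm[measurable]: "h i j \<in> borel_measurable borel" for i j
    using int[of i j] by auto
  have gm: "(\<lambda>w::real^'n^'m. \<Prod>i\<in>UNIV. \<Prod>j\<in>UNIV. h i j (w$i$j)) \<in> borel_measurable borel"
    by measurable
  have eq: "(\<Prod>i\<in>UNIV. \<Prod>j\<in>UNIV. h i j (phi0 f $i$j)) = (\<Prod>b\<in>Basis. H b (f b))" for f
    by (simp only: prod_Basis_mat Hee phi0_def phi0_comp)
  have intH: "b \<in> Basis \<Longrightarrow> integrable lborel (H b)" for b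
    by (auto simp: Basis_mat Hee int)
  have i1: "integrable (\<Pi>\<^sub>M b\<in>Basis. lborel) (\<lambda>f. \<Prod>b\<in>Basis. H b (f b))"
    by (rule product_integrable_prod) (auto intro: intH)
  show "integrable lborel (\<lambda>w::real^'n^'m. \<Prod>i\<in>UNIV. \<Prod>j\<in>UNIV. h i j (w$i$j))"
    unfolding lborel_mat
    by (subst integrable_distr_eq[OF phi0_meas gm]) (simp add: eq i1)
  have "(\<integral>w. (\<Prod>i\<in>UNIV. \<Prod>j\<in>UNIV. h i j (w$i$j)) \<partial>(lborel::(real^'n^'m) measure))
     = (\<integral>f. (\<Prod>b\<in>Basis. H b (f b)) \<partial>(\<Pi>\<^sub>M b\<in>Basis. lborel))"
    unfolding lborel_mat by (subst integral_distr[OF phi0_meas gm]) (simp add: eq)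
  also have "\<dots> = (\<Prod>b\<in>Basis. \<integral>x. H b x \<partial>lborel)"
    by (rule product_integral_prod) (auto intro: intH)
  also have "\<dots> = (\<Prod>i\<in>UNIV. \<Prod>j\<in>UNIV. \<integral>x. h i j x \<partial>lborel)"
    by (simp add: prod_Basis_mat Hee)
  finally show "(\<integral>w. (\<Prod>i\<in>UNIV. \<Prod>j\<in>UNIV. h i j (w$i$j)) \<partial>(lborel::(real^'n^'m) measure))
          = (\<Prod>i\<in>UNIV. \<Prod>j\<in>UNIV. \<integral>x. h i j x \<partial>lborel)" .
qed


lemma pow_if01: "(x::real) ^ (if P then 1 else 0) = (if P then x else 1)"
  by simp

lemma prod_pow_delta:
  fixes f :: "'m::finite \<Rightarrow> 'n::finite \<Rightarrow> real"
  shows "(\<Prod>a\<in>UNIV. \<Prod>b\<in>UNIV. f a b ^ (if a = i \<and> b = k then 1 else 0)) = f i k"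
proof -
  have "(\<Prod>a\<in>UNIV. \<Prod>b\<in>UNIV. f a b ^ (if a = i \<and> b = k then 1 else 0))
      = (\<Prod>a\<in>UNIV. if a = i then (\<Prod>b\<in>UNIV. if b = k then f a b else 1) else 1)"
  proof (intro prod.cong refl)
    fix a b
    show "(\<Prod>b\<in>UNIV. f a b ^ (if a = i \<and> b = k then 1 else 0)) = (if a = i then (\<Prod>b\<in>UNIV. if b = k then f a b else 1) else 1)"
      by (cases "a = i") (simp_all only: pow_if01, simp_all)
  qed
  also have "\<dots> = f i k" by simp
  finally show ?thesis .
qed

definition Gd :: "real^'k::finite^'n::finite \<Rightarrow> real \<Rightarrow> real^'k^'n \<Rightarrow> real" where
  "Gd m \<tau> w = (\<Prod>i\<in>UNIV. \<Prod>j\<in>UNIV. normal_density (m $ i $ j) \<tau> (w $ i $ j))"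

lemma Gd_nonneg: "0 \<le> Gd m \<tau> w"
  unfolding Gd_def by (intro prod_nonneg) auto

lemma Gd_meas[measurable]: "Gd m \<tau> \<in> borel_measurable borel"
  unfolding Gd_def by measurable

lemma gauss_mat_Gd: "gauss_mat m \<tau> = density lborel (\<lambda>w. ennreal (Gd m \<tau> w))"
  unfolding gauss_mat_def Gd_def ..

lemma gauss_prob:
  assumes "\<tau> > 0"
  shows "prob_space (gauss_mat (m::real^'k::finite^'n::finite) \<tau>)"
proof (rule prob_spaceI)
  have "integrable lborel (Gd m \<tau>)" "(\<integral>w. Gd m \<tau> w \<partial>lborel) = 1"
    using int_prod_mat[of "\<lambda>i j. normal_density (m $ i $ j) \<tau>", OF integrable_normal_density] assms
    unfolding Gd_def by auto
  then have "(\<integral>\<^sup>+ w. ennreal (Gd m \<tau> w) \<partial>lborel) = 1"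
    by (subst nn_integral_eq_integral) (auto simp: Gd_nonneg)
  then show "emeasure (gauss_mat m \<tau>) (space (gauss_mat m \<tau>)) = 1"
    unfolding gauss_mat_Gd by (subst emeasure_density) auto
qed


lemma moment_T:
  fixes m :: "real^'k::finite^'n::finite"
  assumes tau: "\<tau> > 0"
  defines "T \<equiv> \<lambda>i j k (w::real^'k^'n). Gd m \<tau> w * (w$i$k - m$i$k) * (w$j$k - m$j$k)"
  shows "integrable lborel (T i j k)" and "(\<integral>w. T i j k w \<partial>lborel) = (if i = j then \<tau>\<^sup>2 else 0)"
proof -
  define \<kappa> where "\<kappa> a b = (if a = i \<and> b = k then 1 else 0) + (if a = j \<and> b = k then 1 else (0::nat))" for a b
  define h where "h a b x = normal_density (m$a$b) \<tau> x * (x - m$a$b) ^ \<kappa> a b" for a b x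
  have Teq: "T i j k = (\<lambda>w. \<Prod>a\<in>UNIV. \<Prod>b\<in>UNIV. h a b (w$a$b))"
  proof
    fix w :: "real^'k^'n"
    have "(\<Prod>a\<in>UNIV. \<Prod>b\<in>UNIV. h a b (w$a$b))
        = Gd m \<tau> w * ((\<Prod>a\<in>UNIV. \<Prod>b\<in>UNIV. (w$a$b - m$a$b) ^ (if a = i \<and> b = k then 1 else 0))
           * (\<Prod>a\<in>UNIV. \<Prod>b\<in>UNIV. (w$a$b - m$a$b) ^ (if a = j \<and> b = k then 1 else 0)))"
      by (simp only: h_def \<kappa>_def Gd_def power_add prod.distrib)
    also have "\<dots> = T i j k w"
      by (simp only: prod_pow_delta[of "\<lambda>a b. w$a$b - m$a$b"] T_def mult.assoc)
    finally show "T i j k w = (\<Prod>a\<in>UNIV. \<Prod>b\<in>UNIV. h a b (w$a$b))" ..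
  qed
  have hint: "integrable lborel (h a b)" for a b
    unfolding h_def using integrable_normal_moment[OF tau] .
  show "integrable lborel (T i j k)"
    unfolding Teq by (rule int_prod_mat(1)[OF hint])
  have "(\<integral>w. T i j k w \<partial>lborel) = (\<Prod>a\<in>UNIV. \<Prod>b\<in>UNIV. \<integral>x. h a b x \<partial>lborel)"
    unfolding Teq by (rule int_prod_mat(2)[OF hint])
  also have "\<dots> = (if i = j then \<tau>\<^sup>2 else 0)"
  proof (cases "i = j")
    case True
    have "(\<integral>x. h a b x \<partial>lborel) = (if a = i \<and> b = k then \<tau>\<^sup>2 else 1)" for a b
    proof (cases "a = i \<and> b = k")
      case True
      then have "\<kappa> a b = 2 * 1" using \<open>i = j\<close> by (simp add: \<kappa>_def)
      then show ?thesis using True integral_normal_moment_even[OF tau, of "m$a$b" 1]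
        unfolding h_def by simp
    next
      case False
      then have "\<kappa> a b = 2 * 0" using \<open>i = j\<close> by (simp add: \<kappa>_def)
      then show ?thesis using False integral_normal_moment_even[OF tau, of "m$a$b" 0]
        unfolding h_def by auto
    qed
    then have "(\<Prod>a\<in>UNIV. \<Prod>b\<in>UNIV. \<integral>x. h a b x \<partial>lborel)
       = (\<Prod>a\<in>UNIV. \<Prod>b\<in>UNIV. (\<tau>\<^sup>2) ^ (if a = i \<and> b = k then 1 else 0))"
      by (simp add: pow_if01)
    also have "\<dots> = \<tau>\<^sup>2" by (rule prod_pow_delta)
    finally show ?thesis using True by simp
  next
    case False
    have "\<kappa> i k = 2 * 0 + 1" using False by (simp add: \<kappa>_def)
    then have "(\<integral>x. h i k x \<partial>lborel) = 0"
      unfolding h_def using integral_normal_moment_odd[OF tau, of "m$i$k" 0] by simp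
    then have "(\<Prod>b\<in>UNIV. \<integral>x. h i b x \<partial>lborel) = 0"
      by (intro prod_zero) auto
    then have "(\<Prod>a\<in>UNIV. \<Prod>b\<in>UNIV. \<integral>x. h a b x \<partial>lborel) = 0"
      by (intro prod_zero) auto
    then show ?thesis using False by simp
  qed
  finally show "(\<integral>w. T i j k w \<partial>lborel) = (if i = j then \<tau>\<^sup>2 else 0)" .
qed


lemma gauss_moment:
  fixes m :: "real^'k::finite^'n::finite" and s :: "'n \<Rightarrow> real"
  assumes tau: "\<tau> > 0"
  shows "(\<integral>\<^sup>+ w. ennreal (\<Sum>k\<in>UNIV. (\<Sum>i\<in>UNIV. (w$i$k - m$i$k) * s i)\<^sup>2) \<partial>gauss_mat m \<tau>)
       = ennreal (\<tau>\<^sup>2 * real CARD('k) * (\<Sum>i\<in>UNIV. (s i)\<^sup>2))"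
proof -
  define T where "T = (\<lambda>i j k (w::real^'k^'n). Gd m \<tau> w * (w$i$k - m$i$k) * (w$j$k - m$j$k))"
  define Q where "Q w = (\<Sum>k\<in>UNIV. (\<Sum>i\<in>UNIV. (w$i$k - m$i$k) * s i)\<^sup>2)" for w :: "real^'k^'n"
  have Tint: "integrable lborel (T i j k)" and Tval: "(\<integral>w. T i j k w \<partial>lborel) = (if i = j then \<tau>\<^sup>2 else 0)" for i j k
    using moment_T[OF tau, of m] unfolding T_def by auto
  have GQ: "Gd m \<tau> w * Q w = (\<Sum>k\<in>UNIV. \<Sum>i\<in>UNIV. \<Sum>j\<in>UNIV. s i * s j * T i j k w)" for w
  proof -
    define a where "a i k = (w$i$k - m$i$k) * s i" for i k
    have "Gd m \<tau> w * Q w = (\<Sum>k\<in>UNIV. Gd m \<tau> w * ((\<Sum>i\<in>UNIV. a i k) * (\<Sum>j\<in>UNIV. a j k)))"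
      by (simp add: Q_def a_def power2_eq_square sum_distrib_left)
    also have "\<dots> = (\<Sum>k\<in>UNIV. \<Sum>i\<in>UNIV. \<Sum>j\<in>UNIV. Gd m \<tau> w * (a i k * a j k))"
      by (simp only: sum_product, simp only: sum_distrib_left)
    also have "\<dots> = (\<Sum>k\<in>UNIV. \<Sum>i\<in>UNIV. \<Sum>j\<in>UNIV. s i * s j * T i j k w)"
      by (simp add: T_def a_def ac_simps)
    finally show ?thesis .
  qed
  have int: "integrable lborel (\<lambda>w. Gd m \<tau> w * Q w)"
    unfolding GQ
    apply (rule Bochner_Integration.integrable_sum)
    apply (rule Bochner_Integration.integrable_sum)
    apply (rule Bochner_Integration.integrable_sum)
    apply (rule integrable_mult_right)
    apply (rule Tint)
    done
  have "(\<integral>\<^sup>+ w. ennreal (Q w) \<partial>gauss_mat m \<tau>) = (\<integral>\<^sup>+ w. ennreal (Gd m \<tau> w) * ennreal (Q w) \<partial>lborel)"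
    unfolding gauss_mat_Gd Q_def by (subst nn_integral_density) auto
  also have "\<dots> = (\<integral>\<^sup>+ w. ennreal (Gd m \<tau> w * Q w) \<partial>lborel)"
    by (intro nn_integral_cong) (rule ennreal_mult'[symmetric, OF Gd_nonneg])
  also have "\<dots> = ennreal (\<integral>w. Gd m \<tau> w * Q w \<partial>lborel)"
    by (intro nn_integral_eq_integral int AE_I2) (auto simp: Q_def Gd_nonneg intro!: mult_nonneg_nonneg sum_nonneg)
  also have "(\<integral>w. Gd m \<tau> w * Q w \<partial>lborel) = (\<Sum>k\<in>(UNIV::'k set). \<Sum>i\<in>UNIV. \<Sum>j\<in>UNIV. s i * s j * (if i = j then \<tau>\<^sup>2 else 0))"
    unfolding GQ
    by (simp add: Bochner_Integration.integral_sum Bochner_Integration.integrable_sum integrable_mult_right Tint Tval del: mult_if_delta)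
  also have "\<dots> = \<tau>\<^sup>2 * real CARD('k) * (\<Sum>i\<in>UNIV. (s i)\<^sup>2)"
    by (simp add: if_distrib[of "\<lambda>x. _ * x"] sum_distrib_left power2_eq_square ac_simps cong: if_cong)
  finally show ?thesis unfolding Q_def .
qed


lemma sets_gauss[measurable_cong]: "sets (gauss_mat m \<tau>) = sets borel"
  unfolding gauss_mat_def by simp

lemma norm_sq_vec: "(norm (v::real^'n::finite))\<^sup>2 = (\<Sum>k\<in>UNIV. (v$k)\<^sup>2)"
  unfolding power2_norm_eq_inner inner_vec_def by (simp add: power2_eq_square)

lemma fnet_comp: "fnet \<sigma> w1 w2 x $ k = (\<Sum>i\<in>UNIV. w2$i$k * \<sigma> (\<Sum>j\<in>UNIV. w1$j$i * x$j))"
  by (simp add: fnet_def matrix_vector_mult_def transpose_def sigma_bar_def mult.commute)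

lemma fnet_diff: "(norm (fnet \<sigma> w1 w2 x - fnet \<sigma> w1 wb2 x))\<^sup>2
   = (\<Sum>k\<in>UNIV. (\<Sum>i\<in>UNIV. (w2$i$k - wb2$i$k) * \<sigma> (\<Sum>j\<in>UNIV. w1$j$i * x$j))\<^sup>2)"
  unfolding norm_sq_vec by (simp add: fnet_comp sum_subtractf left_diff_distrib)



theorem lemma4:
  fixes \<sigma> :: "real \<Rightarrow> real" and M\<sigma> \<tau>1 \<tau>2 :: real
    and X :: "(real^'d0) set" and \<mu> :: "(real^'d0) measure"
    and fP :: "real^'d0 \<Rightarrow> real^'d2"
    and wb1 :: "real^'d1^'d0" and wb2 :: "real^'d2^'d1"
  assumes X_borel: "X \<in> sets borel"
    and mu_sets: "sets \<mu> = sets (restrict_space borel X)"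
    and mu_sfin: "sigma_finite_measure \<mu>"
    and sigma_meas: "\<sigma> \<in> borel_measurable borel"
    and sigma_bdd: "\<forall>u. \<bar>\<sigma> u\<bar> \<le> M\<sigma>"
    and M2_fin: "(\<integral>\<^sup>+ x. ennreal ((norm x)\<^sup>2 / real CARD('d0)) \<partial>\<mu>) < \<infinity>"
    and fP_meas: "fP \<in> borel_measurable \<mu>"
    and fP_L2: "L2sq \<mu> fP < \<infinity>"
    and minimizer: "\<forall>(w1::real^'d1^'d0) (w2::real^'d2^'d1). L2sq \<mu> (\<lambda>x. fnet \<sigma> wb1 wb2 x - fP x)
                            \<le> L2sq \<mu> (\<lambda>x. fnet \<sigma> w1 w2 x - fP x)"
    and tau1: "\<tau>1 > 0" and tau2: "\<tau>2 > 0"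
  shows "(\<integral>\<^sup>+ w. L2sq \<mu> (\<lambda>x. fnet \<sigma> (fst w) (snd w) x - fnet \<sigma> (fst w) wb2 x)
            \<partial>(gauss_mat wb1 \<tau>1 \<Otimes>\<^sub>M gauss_mat wb2 \<tau>2))
         \<le> ennreal ((M\<sigma> * \<tau>2)\<^sup>2 * real CARD('d1) * real CARD('d2)) * emeasure \<mu> X"
proof -
  note [measurable] = sigma_meas
  define P1 where "P1 = gauss_mat wb1 \<tau>1"
  define P2 where "P2 = gauss_mat wb2 \<tau>2"
  define PP where "PP = P1 \<Otimes>\<^sub>M P2"
  define C where "C = ennreal ((M\<sigma> * \<tau>2)\<^sup>2 * real CARD('d1) * real CARD('d2))"
  define F where "F p = ennreal (\<Sum>k\<in>UNIV. (\<Sum>i\<in>UNIV. (snd (fst p)$i$k - wb2$i$k) *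
       \<sigma> (\<Sum>j\<in>UNIV. fst (fst p)$j$i * snd p$j))\<^sup>2)"
    for p :: "((real^'d1^'d0) \<times> (real^'d2^'d1)) \<times> (real^'d0)"
  have pr1: "prob_space P1" unfolding P1_def by (rule gauss_prob[OF tau1])
  have pr2: "prob_space P2" unfolding P2_def by (rule gauss_prob[OF tau2])
  have prPP: "prob_space PP" unfolding PP_def by (rule prob_space_pair[OF pr1 pr2])
  interpret mu: sigma_finite_measure \<mu> by (rule mu_sfin)
  interpret PPs: prob_space PP by (rule prPP)
  interpret P2s: prob_space P2 by (rule pr2)
  interpret P1s: prob_space P1 by (rule pr1)
  interpret pair_sigma_finite PP \<mu>
    by (simp add: pair_sigma_finite_def PPs.sigma_finite_measure_axioms mu.sigma_finite_measure_axioms)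
  have sP1[measurable_cong]: "sets P1 = sets borel" unfolding P1_def by (rule sets_gauss)
  have sP2[measurable_cong]: "sets P2 = sets borel" unfolding P2_def by (rule sets_gauss)
  have mux[measurable]: "(\<lambda>x. x $ j) \<in> borel_measurable \<mu>" for j
    using measurable_restrict_space1[OF borel_measurable_nth[of j], of X]
    by (simp add: measurable_cong_sets[OF mu_sets refl])
  have Fm: "F \<in> borel_measurable (PP \<Otimes>\<^sub>M \<mu>)"
  proof -
    have mA: "(\<lambda>p::((real^'d1^'d0) \<times> (real^'d2^'d1)) \<times> (real^'d0). snd (fst p) $ i $ k) \<in> borel_measurable (PP \<Otimes>\<^sub>M \<mu>)" for i k
    proof -
      have "(\<lambda>w::real^'d2^'d1. w $ i $ k) \<in> borel_measurable P2"
        using measurable_mat_nth by (simp add: measurable_cong_sets[OF sP2 refl])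
      then have "(\<lambda>q. snd q $ i $ k) \<in> borel_measurable PP"
        unfolding PP_def by (rule measurable_compose[OF measurable_snd])
      then show ?thesis by (rule measurable_compose[OF measurable_fst])
    qed
    have mB: "(\<lambda>p::((real^'d1^'d0) \<times> (real^'d2^'d1)) \<times> (real^'d0). fst (fst p) $ i $ k) \<in> borel_measurable (PP \<Otimes>\<^sub>M \<mu>)" for i k
    proof -
      have "(\<lambda>w::real^'d1^'d0. w $ i $ k) \<in> borel_measurable P1"
        using measurable_mat_nth by (simp add: measurable_cong_sets[OF sP1 refl])
      then have "(\<lambda>q. fst q $ i $ k) \<in> borel_measurable PP"
        unfolding PP_def by (rule measurable_compose[OF measurable_fst])
      then show ?thesis by (rule measurable_compose[OF measurable_fst])
    qed
    have mC: "(\<lambda>p::((real^'d1^'d0) \<times> (real^'d2^'d1)) \<times> (real^'d0). snd p $ j) \<in> borel_measurable (PP \<Otimes>\<^sub>M \<mu>)" for j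
      by (rule measurable_compose[OF measurable_snd mux])
    have mS: "(\<lambda>p::((real^'d1^'d0) \<times> (real^'d2^'d1)) \<times> (real^'d0). \<sigma> (\<Sum>j\<in>UNIV. fst (fst p) $ j $ i * snd p $ j)) \<in> borel_measurable (PP \<Otimes>\<^sub>M \<mu>)" for i
      by (rule measurable_compose[OF _ sigma_meas]) (intro borel_measurable_sum borel_measurable_times mB mC)
    show ?thesis unfolding F_def
      by (intro measurable_compose[OF _ measurable_ennreal] borel_measurable_sum borel_measurable_power
                borel_measurable_times borel_measurable_diff mA mS borel_measurable_const)
  qed
  have spmu: "space \<mu> = X"
    using sets_eq_imp_space_eq[OF mu_sets] by (simp add: space_restrict_space)
  have Sbd: "(\<Sum>i\<in>(UNIV::'d1 set). (\<sigma> (t i))\<^sup>2) \<le> real CARD('d1) * M\<sigma>\<^sup>2" for t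
  proof -
    have "(\<sigma> (t i))\<^sup>2 \<le> M\<sigma>\<^sup>2" for i
    proof -
      have "\<bar>\<sigma> (t i)\<bar>\<^sup>2 \<le> M\<sigma>\<^sup>2" by (rule power_mono) (use sigma_bdd in auto)
      then show ?thesis by simp
    qed
    then show ?thesis using sum_bounded_above[of UNIV "\<lambda>i. (\<sigma> (t i))\<^sup>2" "M\<sigma>\<^sup>2"] by simp
  qed
  have inner: "(\<integral>\<^sup>+ w. F (w, x) \<partial>PP) \<le> C" if xs: "x \<in> space \<mu>" for x
  proof -
    have m2: "(\<lambda>w. F (w, x)) \<in> borel_measurable PP"
      by (rule measurable_Pair1[OF Fm xs])
    have "(\<integral>\<^sup>+ w. F (w, x) \<partial>PP) = (\<integral>\<^sup>+ w1. \<integral>\<^sup>+ w2. F ((w1, w2), x) \<partial>P2 \<partial>P1)"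
      unfolding PP_def by (rule P2s.nn_integral_fst[symmetric]) (use m2 in \<open>simp add: PP_def\<close>)
    also have "\<dots> \<le> (\<integral>\<^sup>+ w1. C \<partial>P1)"
    proof (rule nn_integral_mono)
      fix w1 :: "real^'d1^'d0"
      define t where "t i = (\<Sum>j\<in>UNIV. w1$j$i * x$j)" for i
      have "(\<integral>\<^sup>+ w2. F ((w1, w2), x) \<partial>P2)
          = ennreal (\<tau>2\<^sup>2 * real CARD('d2) * (\<Sum>i\<in>UNIV. (\<sigma> (t i))\<^sup>2))"
        unfolding F_def P2_def t_def using gauss_moment[OF tau2, of wb2 "\<lambda>i. \<sigma> (t i)"]
        by (simp add: t_def)
      also have "\<dots> \<le> C"
        unfolding C_def
      proof (rule ennreal_leI)
        have "\<tau>2\<^sup>2 * real CARD('d2) * (\<Sum>i\<in>UNIV. (\<sigma> (t i))\<^sup>2)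
            \<le> \<tau>2\<^sup>2 * real CARD('d2) * (real CARD('d1) * M\<sigma>\<^sup>2)"
          by (intro mult_left_mono Sbd) auto
        then show "\<tau>2\<^sup>2 * real CARD('d2) * (\<Sum>i\<in>UNIV. (\<sigma> (t i))\<^sup>2)
            \<le> (M\<sigma> * \<tau>2)\<^sup>2 * real CARD('d1) * real CARD('d2)"
          by (simp add: power_mult_distrib ac_simps)
      qed
      finally show "(\<integral>\<^sup>+ w2. F ((w1, w2), x) \<partial>P2) \<le> C" .
    qed
    also have "\<dots> = C" using P1s.emeasure_space_1 by simp
    finally show ?thesis .
  qed
  have "(\<integral>\<^sup>+ w. L2sq \<mu> (\<lambda>x. fnet \<sigma> (fst w) (snd w) x - fnet \<sigma> (fst w) wb2 x) \<partial>PP)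
      = (\<integral>\<^sup>+ w. \<integral>\<^sup>+ x. F (w, x) \<partial>\<mu> \<partial>PP)"
    unfolding L2sq_def F_def by (intro nn_integral_cong) (simp only: fnet_diff fst_conv snd_conv)
  also have "\<dots> = (\<integral>\<^sup>+ x. \<integral>\<^sup>+ w. F (w, x) \<partial>PP \<partial>\<mu>)"
    by (rule Fubini[OF Fm, symmetric])
  also have "\<dots> \<le> (\<integral>\<^sup>+ x. C \<partial>\<mu>)"
    by (rule nn_integral_mono) (rule inner, assumption)
  also have "\<dots> = C * emeasure \<mu> X" by (simp add: spmu)
  finally show ?thesis unfolding C_def PP_def P1_def P2_def .
qed

end
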